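(* Let $0\le s<t\le T$ and let $\gamma_{(s,t)}$ be the three-part path in $\{\mathrm{Im}\,z\ge0\}$ $$\gamma_{(s,t)}=[s,s+i(t-s)]\cup[s+i(t-s),t+i(t-s)]\cup[t+i(t-s),t],$$ and $\overline{\gamma_{(s,t)}}$ its complex conjugate. Then for any $\varepsilon>0$ and $\alpha\in(0,1)$, $$\int_{\gamma_{(s,t)}}|dz|\int_{\overline{\gamma_{(s,t)}}}|dw|\,|-i(z-w)+\varepsilon|^{\alpha-2}\le c\,|t-s|^\alpha,$$ where $c$ does not depend on $s,t,\varepsilon$. Moreover, for any $\eta>0$ and $\lambda\in(0,\alpha)$, $$\int_{\gamma_{(s,t)}}|dz|\int_{\overline{\gamma_{(s,t)}}}|dw|\,\big|(-i(z-w)+\varepsilon)^{\alpha-2}-(-i(z-w)+\eta)^{\alpha-2}\big|\le c\,|t-s|^{\alpha-\lambda}|\varepsilon-\eta|^\lambda,$$ where $c$ does not depend on $s,t,\varepsilon,\eta$.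
   Context: $|dz|$ denotes integration with respect to arc length along the path. Complex powers are taken with the principal branch (for $z\in\gamma_{(s,t)}$, $w\in\overline{\gamma_{(s,t)}}$ and $\varepsilon>0$, $-i(z-w)+\varepsilon$ has positive real part). *)

theory Defs
  imports "HOL-Analysis.Analysis"
begin

text \<open>The three-part path gamma_(s,t) in the closed upper half plane, as a list of
  oriented line segments (start point, end point).\<close>
definition gamma_path :: "real \<Rightarrow> real \<Rightarrow> (complex \<times> complex) list" where
  "gamma_path s t =
     [ (complex_of_real s, complex_of_real s + \<i> * complex_of_real (t - s)),
       (complex_of_real s + \<i> * complex_of_real (t - s), complex_of_real t + \<i> * complex_of_real (t - s)),
       (complex_of_real t + \<i> * complex_of_real (t - s), complex_of_real t) ]"

definition conj_path :: "(complex \<times> complex) list \<Rightarrow> (complex \<times> complex) list" where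
  "conj_path P = map (\<lambda>(a, b). (cnj a, cnj b)) P"

text \<open>Double arc-length integral int_P |dz| int_Q |dw| f z w of a nonnegative function,
  along polygonal paths P and Q: each segment [a,b] is parametrised by a + u (b - a),
  u in [0,1], with |dz| = |b - a| du.  (Lebesgue nonnegative integral, so the value
  lies in [0, infinity].)\<close>
definition arclen_integral2 ::
  "(complex \<times> complex) list \<Rightarrow> (complex \<times> complex) list \<Rightarrow> (complex \<Rightarrow> complex \<Rightarrow> real) \<Rightarrow> ennreal" where
  "arclen_integral2 P Q f =
     sum_list [ ennreal (cmod (b - a) * cmod (d - c)) *
                (\<integral>\<^sup>+ u. indicator {0..1} u *
                   (\<integral>\<^sup>+ v. indicator {0..1} v *
                       ennreal (f (a + complex_of_real u * (b - a)) (c + complex_of_real v * (d - c))) \<partial>lborel) \<partial>lborel)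
              . (a, b) \<leftarrow> P, (c, d) \<leftarrow> Q ]"

end

theory Submission
  imports Defs
begin

definition Pq :: "real \<Rightarrow> real \<Rightarrow> real" where "Pq q u = u powr q + (1-u) powr q"

lemma J1: assumes "-1 < q"
  shows "(\<integral>\<^sup>+v. indicator {0..1} v * ennreal (v powr q) \<partial>lborel) = ennreal (1/(q+1))"
proof -
  have "(\<integral>\<^sup>+v. ennreal (v powr q) * indicator {0..1} v \<partial>lborel) = ennreal (1 powr (q+1)/(q+1))"
    by (rule nn_integral_has_integral_lebesgue'[OF _ has_integral_powr_from_0]) (use assms in auto)
  then show ?thesis by (simp add: mult.commute)
qed

lemma J2: assumes "-1 < q"
  shows "(\<integral>\<^sup>+v. indicator {0..1} v * ennreal ((1-v) powr q) \<partial>lborel) = ennreal (1/(q+1))"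
proof -
  have "(\<integral>\<^sup>+v. indicator {0..1} v * ennreal ((1-v) powr q) \<partial>lborel)
     = ennreal \<bar>-1\<bar> * (\<integral>\<^sup>+v. indicator {0..1} (1 + (-1) * v) * ennreal ((1-(1 + (-1) * v)) powr q) \<partial>lborel)"
    by (rule nn_integral_real_affine) auto
  also have "\<dots> = (\<integral>\<^sup>+v. indicator {0..1} v * ennreal (v powr q) \<partial>lborel)"
    by (auto intro!: nn_integral_cong simp: indicator_def)
  finally show ?thesis using J1[OF assms] by simp
qed

lemma J: assumes "-1 < q"
  shows "(\<integral>\<^sup>+v. indicator {0..1} v * ennreal (Pq q v) \<partial>lborel) = ennreal (2/(q+1))"
proof -
  have "(\<integral>\<^sup>+v. indicator {0..1} v * ennreal (Pq q v) \<partial>lborel)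
    = (\<integral>\<^sup>+v. indicator {0..1} v * ennreal (v powr q) + indicator {0..1} v * ennreal ((1-v) powr q) \<partial>lborel)"
    by (auto intro!: nn_integral_cong simp: Pq_def ennreal_plus distrib_left)
  also have "\<dots> = (\<integral>\<^sup>+v. indicator {0..1} v * ennreal (v powr q) \<partial>lborel) + (\<integral>\<^sup>+v. indicator {0..1} v * ennreal ((1-v) powr q) \<partial>lborel)"
    by (rule nn_integral_add) auto
  also have "\<dots> = ennreal (2/(q+1))" using J1[OF assms] J2[OF assms] assms
    by (simp add: ennreal_plus[symmetric] divide_nonneg_nonneg)
  finally show ?thesis .
qed

lemma Pq_nonneg: "0 \<le> Pq q u" by (simp add: Pq_def)

lemma term_bound:
  fixes a b c d :: complex and f :: "complex \<Rightarrow> complex \<Rightarrow> real" and q K L :: real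
  assumes q: "-1 < q" and K: "0 \<le> K" and L: "0 < L"
  and hb: "\<And>u v. 0<u \<Longrightarrow> u<1 \<Longrightarrow> 0<v \<Longrightarrow> v<1 \<Longrightarrow>
     f (a + complex_of_real u * (b-a)) (c + complex_of_real v * (d-c)) \<le> K * L powr (2*q) * Pq q u * Pq q v"
  shows "(\<integral>\<^sup>+u. indicator {0..1} u * (\<integral>\<^sup>+v. indicator {0..1} v *
            ennreal (f (a + complex_of_real u * (b - a)) (c + complex_of_real v * (d - c))) \<partial>lborel) \<partial>lborel)
        \<le> ennreal (K * L powr (2*q) * (2/(q+1))^2)"
proof -
  define Q where "Q = 2/(q+1)"
  have Q: "0 \<le> Q" using q by (simp add: Q_def)
  have JJ: "(\<integral>\<^sup>+v. indicator {0..1} v * ennreal (Pq q v) \<partial>lborel) = ennreal Q"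
    using J[OF q] by (simp add: Q_def)
  have KL: "0 \<le> K * L powr (2*q)" using K by simp
  have AE01: "AE x in lborel. x \<noteq> (0::real) \<and> x \<noteq> 1"
    using AE_lborel_singleton[of "0::real"] AE_lborel_singleton[of "1::real"] by eventually_elim auto
  have inner: "(\<integral>\<^sup>+v. indicator {0..1} v * ennreal (f (a + complex_of_real u * (b - a)) (c + complex_of_real v * (d - c))) \<partial>lborel)
      \<le> ennreal (K * L powr (2*q) * Pq q u) * ennreal Q" if u: "0<u" "u<1" for u
  proof -
    have "(\<integral>\<^sup>+v. indicator {0..1} v * ennreal (f (a + complex_of_real u * (b - a)) (c + complex_of_real v * (d - c))) \<partial>lborel)
       \<le> (\<integral>\<^sup>+v. ennreal (K * L powr (2*q) * Pq q u) * (indicator {0..1} v * ennreal (Pq q v)) \<partial>lborel)"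
    proof (rule nn_integral_mono_AE)
      show "AE v in lborel. indicator {0..1} v * ennreal (f (a + complex_of_real u * (b - a)) (c + complex_of_real v * (d - c)))
          \<le> ennreal (K * L powr (2*q) * Pq q u) * (indicator {0..1} v * ennreal (Pq q v))"
        using AE01
      proof eventually_elim
        case (elim v)
        show ?case
        proof (cases "v \<in> {0..1}")
          case True
          then have v: "0<v" "v<1" using elim by auto
          have "ennreal (f (a + complex_of_real u * (b - a)) (c + complex_of_real v * (d - c)))
              \<le> ennreal (K * L powr (2*q) * Pq q u * Pq q v)"
            by (rule ennreal_leI) (rule hb[OF u v])
          also have "\<dots> = ennreal (K * L powr (2*q) * Pq q u) * ennreal (Pq q v)"
            by (simp add: ennreal_mult KL Pq_nonneg)
          finally show ?thesis using True by simp
        qed simp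
      qed
    qed
    also have "\<dots> = ennreal (K * L powr (2*q) * Pq q u) * (\<integral>\<^sup>+v. indicator {0..1} v * ennreal (Pq q v) \<partial>lborel)"
      by (rule nn_integral_cmult) (simp add: Pq_def)
    finally show ?thesis by (simp add: JJ)
  qed
  have "(\<integral>\<^sup>+u. indicator {0..1} u * (\<integral>\<^sup>+v. indicator {0..1} v *
            ennreal (f (a + complex_of_real u * (b - a)) (c + complex_of_real v * (d - c))) \<partial>lborel) \<partial>lborel)
     \<le> (\<integral>\<^sup>+u. ennreal (K * L powr (2*q) * Q) * (indicator {0..1} u * ennreal (Pq q u)) \<partial>lborel)"
  proof (rule nn_integral_mono_AE)
    show "AE u in lborel. indicator {0..1} u * (\<integral>\<^sup>+v. indicator {0..1} v *
            ennreal (f (a + complex_of_real u * (b - a)) (c + complex_of_real v * (d - c))) \<partial>lborel)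
        \<le> ennreal (K * L powr (2*q) * Q) * (indicator {0..1} u * ennreal (Pq q u))"
      using AE01
    proof eventually_elim
      case (elim u)
      show ?case
      proof (cases "u \<in> {0..1}")
        case True
        then have u: "0<u" "u<1" using elim by auto
        have "ennreal (K * L powr (2*q) * Pq q u) * ennreal Q = ennreal (K * L powr (2*q) * Q) * ennreal (Pq q u)"
          using KL Pq_nonneg[of q u] Q by (simp add: ennreal_mult'[symmetric] mult_ac)
        then show ?thesis using True inner[OF u] by simp
      qed simp
    qed
  qed
  also have "\<dots> = ennreal (K * L powr (2*q) * Q) * (\<integral>\<^sup>+u. indicator {0..1} u * ennreal (Pq q u) \<partial>lborel)"
    by (rule nn_integral_cmult) (simp add: Pq_def)
  also have "\<dots> = ennreal (K * L powr (2*q) * Q^2)"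
    unfolding JJ using KL Q by (simp add: ennreal_mult'[symmetric] power2_eq_square mult_ac)
  finally show ?thesis by (simp add: Q_def)
qed

lemma Pq_ge1: assumes "q < 0" "0 < u" "u < 1" shows "1 \<le> Pq q u"
proof -
  have "1 powr q \<le> u powr q" by (rule powr_mono2') (use assms in auto)
  then have "1 \<le> u powr q" by simp
  moreover have "0 \<le> (1-u) powr q" by simp
  ultimately show ?thesis unfolding Pq_def by linarith
qed

lemma Pq_ge: assumes "q < 0" "0 < u" "u < 1" shows "u powr q \<le> Pq q u" "(1-u) powr q \<le> Pq q u"
  by (auto simp: Pq_def)

definition geo_ok where
  "geo_ok L q z w u v \<longleftrightarrow> 0 \<le> Im z \<and> Im w \<le> 0 \<and>
     (\<exists>m>0. L*m \<le> cmod(- \<i> * (z - w)) \<and> m powr (2*q) \<le> Pq q u * Pq q v)"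

lemma prod_bound: fixes x y q Px Py :: real assumes "q<0" "0<x" "0<y"
  "x powr q \<le> Px" "y powr q \<le> Py"
  shows "(x+y) powr (2*q) \<le> Px * Py"
proof -
  have e: "(x+y)^2 = x*y + (x*x + x*y + y*y)" by (simp add: power2_eq_square algebra_simps)
  have "0 \<le> x*x" "0 \<le> y*y" "0 \<le> x*y" using assms by auto
  then have xy: "x*y \<le> (x+y)^2" unfolding e by linarith
  have "(x+y) powr (2*q) = ((x+y)^2) powr q"
  proof -
    have "(x+y) powr (2*q) = ((x+y) powr 2) powr q" by (simp add: powr_powr)
    also have "(x+y) powr 2 = (x+y)^2" using assms by (simp add: powr_numeral)
    finally show ?thesis .
  qed
  also have "\<dots> \<le> (x*y) powr q" by (rule powr_mono2') (use assms xy in auto)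
  also have "\<dots> = x powr q * y powr q" using assms by (simp add: powr_mult)
  also have "\<dots> \<le> Px * Py"
  proof (rule mult_mono)
    have "0 \<le> x powr q" by simp
    then show "0 \<le> Px" using assms by linarith
  qed (use assms in auto)
  finally show ?thesis .
qed

lemma geo1: assumes "q<0" "0<u" "u<1" "0<v" "v<1" "0 \<le> Im z" "Im w \<le> 0"
  "L \<le> Im z - Im w \<or> L \<le> \<bar>Re z - Re w\<bar>"
  shows "geo_ok L q z w u v"
  unfolding geo_ok_def
proof (intro conjI exI[of _ 1])
  show "L * 1 \<le> cmod (- \<i> * (z - w))" using assms(8) abs_Re_le_cmod[of "- \<i> * (z - w)"] abs_Im_le_cmod[of "- \<i> * (z - w)"]
    by auto
  show "1 powr (2*q) \<le> Pq q u * Pq q v"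
    using Pq_ge1[OF assms(1-3)] Pq_ge1[OF assms(1,4,5)] mult_mono[of 1 "Pq q u" 1 "Pq q v"] by simp
qed (use assms in auto)

lemma geo1a: assumes "q<0" "0<u" "u<1" "0<v" "v<1" "0 \<le> Im z" "Im w \<le> 0"
  "L \<le> Im z - Im w"  shows "geo_ok L q z w u v"
  by (rule geo1) (use assms in auto)

lemma geo1b: assumes "q<0" "0<u" "u<1" "0<v" "v<1" "0 \<le> Im z" "Im w \<le> 0"
  "L \<le> \<bar>Re z - Re w\<bar>"  shows "geo_ok L q z w u v"
  by (rule geo1) (use assms in auto)

lemma geo2: assumes "q<0" "0<u" "u<1" "0<v" "v<1" "0 \<le> Im z" "Im w \<le> 0" "0 < L"
  "Im z - Im w = L * (u + v)"
  shows "geo_ok L q z w u v"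
  unfolding geo_ok_def
proof (intro conjI exI[of _ "u+v"])
  show "L * (u+v) \<le> cmod (- \<i> * (z - w))" using assms(9) abs_Re_le_cmod[of "- \<i> * (z - w)"] 
    by auto
  show "(u+v) powr (2*q) \<le> Pq q u * Pq q v"
    by (rule prod_bound[OF assms(1,2,4) Pq_ge(1)[OF assms(1-3)] Pq_ge(1)[OF assms(1,4,5)]])
qed (use assms in auto)

lemma geo3: assumes "q<0" "0<u" "u<1" "0<v" "v<1" "0 \<le> Im z" "Im w \<le> 0" "0 < L"
  "Im z - Im w = L * ((1-u) + (1-v))"
  shows "geo_ok L q z w u v"
  unfolding geo_ok_def
proof (intro conjI exI[of _ "(1-u)+(1-v)"])
  show "L * ((1-u)+(1-v)) \<le> cmod (- \<i> * (z - w))" using assms(9) abs_Re_le_cmod[of "- \<i> * (z - w)"] 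
    by auto
  show "((1-u)+(1-v)) powr (2*q) \<le> Pq q u * Pq q v"
    by (rule prod_bound[OF assms(1) _ _ Pq_ge(2)[OF assms(1-3)] Pq_ge(2)[OF assms(1,4,5)]]) (use assms in auto)
qed (use assms in auto)

lemma pair:
  fixes a b c d :: complex and f :: "complex \<Rightarrow> complex \<Rightarrow> real" and q K L :: real
  assumes q: "-1 < q" "q < 0" and K: "0 \<le> K" and L: "0 < L"
  and ab: "cmod (b-a) = L" and cd: "cmod (d-c) = L"
  and bound: "\<And>z w. 0 \<le> Im z \<Longrightarrow> Im w \<le> 0 \<Longrightarrow> - \<i> * (z - w) \<noteq> 0 \<Longrightarrow> f z w \<le> K * cmod (- \<i> * (z - w)) powr (2*q)"
  and geo: "\<And>u v. 0<u \<Longrightarrow> u<1 \<Longrightarrow> 0<v \<Longrightarrow> v<1 \<Longrightarrow>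
     0 < u * L \<Longrightarrow> u * L < L \<Longrightarrow> 0 < v * L \<Longrightarrow> v * L < L \<Longrightarrow>
     geo_ok L q (a + complex_of_real u * (b-a)) (c + complex_of_real v * (d-c)) u v"
  shows "ennreal (cmod (b - a) * cmod (d - c)) * (\<integral>\<^sup>+u. indicator {0..1} u * (\<integral>\<^sup>+v. indicator {0..1} v *
            ennreal (f (a + complex_of_real u * (b - a)) (c + complex_of_real v * (d - c))) \<partial>lborel) \<partial>lborel)
        \<le> ennreal (K * (2/(q+1))^2 * L powr (2*q+2))"
proof -
  have hb: "f (a + complex_of_real u * (b-a)) (c + complex_of_real v * (d-c)) \<le> K * L powr (2*q) * Pq q u * Pq q v"
    if uv: "0<u" "u<1" "0<v" "v<1" for u v
  proof -
    define z where "z = a + complex_of_real u * (b-a)"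
    define w where "w = c + complex_of_real v * (d-c)"
    have uL: "u * L < L" "v * L < L" using uv L by auto
    obtain m where m: "m > 0" "L*m \<le> cmod(- \<i> * (z - w))" "m powr (2*q) \<le> Pq q u * Pq q v"
      and zw: "0 \<le> Im z" "Im w \<le> 0"
      using geo[OF uv mult_pos_pos[OF uv(1) L] uL(1) mult_pos_pos[OF uv(3) L] uL(2)] uv L unfolding geo_ok_def z_def w_def by blast
    have pos: "0 < L*m" using m L by simp
    then have nz: "- \<i> * (z - w) \<noteq> 0" using m(2) by auto
    have "f z w \<le> K * cmod (- \<i> * (z - w)) powr (2*q)" by (rule bound[OF zw nz])
    also have "\<dots> \<le> K * (L*m) powr (2*q)"
      by (rule mult_left_mono[OF powr_mono2']) (use q K pos m in auto)
    also have "\<dots> = K * L powr (2*q) * m powr (2*q)" using L m by (simp add: powr_mult)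
    also have "\<dots> \<le> K * L powr (2*q) * (Pq q u * Pq q v)"
      by (rule mult_left_mono[OF m(3)]) (use K in simp)
    finally show ?thesis unfolding z_def w_def by (simp add: mult_ac)
  qed
  have "ennreal (cmod (b - a) * cmod (d - c)) * (\<integral>\<^sup>+u. indicator {0..1} u * (\<integral>\<^sup>+v. indicator {0..1} v *
            ennreal (f (a + complex_of_real u * (b - a)) (c + complex_of_real v * (d - c))) \<partial>lborel) \<partial>lborel)
     \<le> ennreal (L * L) * ennreal (K * L powr (2*q) * (2/(q+1))^2)"
    unfolding ab cd by (rule mult_left_mono[OF term_bound]) (use q K L hb in auto)
  also have "\<dots> = ennreal (K * (2/(q+1))^2 * L powr (2*q+2))"
    using L K q by (simp add: ennreal_mult'[symmetric] powr_add mult_ac power2_eq_square)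
  finally show ?thesis .
qed

lemma list_bound:
  fixes F :: "complex \<Rightarrow> complex \<Rightarrow> complex \<Rightarrow> complex \<Rightarrow> ennreal"
  assumes "\<And>a b c d. (a,b) \<in> set P \<Longrightarrow> (c,d) \<in> set Q \<Longrightarrow> F a b c d \<le> X"
  shows "sum_list [F a b c d. (a,b) \<leftarrow> P, (c,d) \<leftarrow> Q] \<le> of_nat (length P * length Q) * X"
  using assms
proof (induction P)
  case Nil
  then show ?case by simp
next
  case (Cons p P)
  obtain a b where p: "p = (a,b)" by (cases p)
  have "sum_list [F a b c d. (c,d) \<leftarrow> Q] \<le> of_nat (length Q) * X"
    using Cons.prems[of a b] unfolding p
  proof (induction Q)
    case (Cons r Q)
    obtain c d where r: "r = (c,d)" by (cases r)
    have "F a b c d \<le> X" using Cons.prems[of c d] r by simp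
    moreover have "sum_list [F a b c d. (c,d) \<leftarrow> Q] \<le> of_nat (length Q) * X"
      using Cons by auto
    ultimately show ?case using r by (simp add: add_mono distrib_right)
  qed simp
  moreover have "sum_list [F a b c d. (a,b) \<leftarrow> P, (c,d) \<leftarrow> Q] \<le> of_nat (length P * length Q) * X"
    using Cons by auto
  ultimately show ?case using p by (simp add: add_mono distrib_right)
qed

lemma pairs0:
  fixes f :: "complex \<Rightarrow> complex \<Rightarrow> real" and q K :: real
  assumes q: "-1 < q" "q < 0" and K: "0 \<le> K" and L: "0 < L"
  and bound: "\<And>z w. 0 \<le> Im z \<Longrightarrow> Im w \<le> 0 \<Longrightarrow> - \<i> * (z - w) \<noteq> 0 \<Longrightarrow> f z w \<le> K * cmod (- \<i> * (z - w)) powr (2*q)"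
  shows "\<forall>p\<in>set (gamma_path s (s+L)). \<forall>r\<in>set (conj_path (gamma_path s (s+L))).
     ennreal (cmod (snd p - fst p) * cmod (snd r - fst r)) * (\<integral>\<^sup>+u. indicator {0..1} u * (\<integral>\<^sup>+v. indicator {0..1} v *
            ennreal (f (fst p + complex_of_real u * (snd p - fst p)) (fst r + complex_of_real v * (snd r - fst r))) \<partial>lborel) \<partial>lborel)
     \<le> ennreal (K * (2/(q+1))^2 * L powr (2*q+2))"
  unfolding gamma_path_def conj_path_def
  apply (simp only: list.set list.map ball_simps split_conv fst_conv snd_conv simp_thms)
  apply (intro conjI; rule pair[where f=f, OF q K L _ _ bound];
     (assumption | (use L in \<open>simp add: cmod_def\<close>; fail)
      | (rule geo2; use q L in \<open>simp add: algebra_simps\<close>; fail)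
      | (rule geo3; use q L in \<open>simp add: algebra_simps\<close>; fail)
      | (rule geo1a; use q L in \<open>simp add: algebra_simps\<close>; fail)
      | (rule geo1b; use q L in \<open>simp add: algebra_simps\<close>; fail))?)
  done

lemma cmod_shift: fixes A :: complex assumes "0 \<le> Re A" "0 \<le> x"
  shows "cmod A \<le> cmod (A + complex_of_real x)"
proof -
  have "(Re A)^2 + (Im A)^2 \<le> (Re A + x)^2 + (Im A)^2"
    using assms by (simp add: power2_eq_square algebra_simps)
  then show ?thesis unfolding cmod_def by (simp add: real_sqrt_le_mono)
qed

lemma seg_pt: fixes A :: complex assumes "z \<in> closed_segment (A + complex_of_real h) (A + complex_of_real e)" "0 < e" "0 < h"
  shows "\<exists>x>0. z = A + complex_of_real x"
proof -
  obtain u where u: "0 \<le> u" "u \<le> 1" "z = (1 - u) *\<^sub>R (A + complex_of_real h) + u *\<^sub>R (A + complex_of_real e)"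
    using assms(1) unfolding in_segment by blast
  have "z = A + complex_of_real ((1-u)*h + u*e)"
    using u(3) by (simp add: scaleR_conv_of_real algebra_simps)
  moreover have "0 < (1-u)*h + u*e"
  proof (cases "u = 1")
    case True then show ?thesis using assms by simp
  next
    case False then have "0 < (1-u)*h" using u assms by simp
    moreover have "0 \<le> u*e" using u assms by simp
    ultimately show ?thesis by linarith
  qed
  ultimately show ?thesis by blast
qed

lemma mvt_powr: fixes A :: complex and p e h :: real
  assumes A: "0 \<le> Re A" "A \<noteq> 0" and eh: "0 < e" "0 < h" and p: "p < 0" "\<bar>p\<bar> \<le> 2"
  shows "cmod ((A + complex_of_real e) powr complex_of_real p - (A + complex_of_real h) powr complex_of_real p)
     \<le> 2 * cmod A powr (p-1) * \<bar>e - h\<bar>"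
proof -
  define S where "S = closed_segment (A + complex_of_real h) (A + complex_of_real e)"
  define F where "F = (\<lambda>z::complex. z powr complex_of_real p)"
  define F' where "F' = (\<lambda>z::complex. complex_of_real p * z powr (complex_of_real p - 1))"
  define B where "B = 2 * cmod A powr (p-1)"
  have cS: "convex S" unfolding S_def by (rule convex_closed_segment)
  have mem: "A + complex_of_real e \<in> S" "A + complex_of_real h \<in> S" unfolding S_def by (simp_all add: ends_in_segment)
  have der: "(F has_field_derivative F' z) (at z within S)" and nb: "norm (F' z) \<le> B" if z: "z \<in> S" for z
  proof -
    obtain x where x: "x > 0" "z = A + complex_of_real x" using seg_pt[OF z[unfolded S_def] eh] by blast
    have Rez: "0 < Re z" using x A by simp
    then have "z \<notin> \<real>\<^sub>\<le>\<^sub>0" by (simp add: complex_nonpos_Reals_iff)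
    then show "(F has_field_derivative F' z) (at z within S)"
      unfolding F_def F'_def by (rule has_field_derivative_at_within[OF has_field_derivative_powr])
    have zA: "cmod A \<le> cmod z" using cmod_shift[OF A(1), of x] x by simp
    have Apos: "0 < cmod A" using A by simp
    have "norm (F' z) = \<bar>p\<bar> * cmod z powr (p - 1)"
      unfolding F'_def by (simp add: norm_mult norm_powr_real_powr')
    also have "\<dots> \<le> 2 * cmod A powr (p - 1)"
      by (rule mult_mono[OF p(2) powr_mono2']) (use p zA Apos in auto)
    finally show "norm (F' z) \<le> B" unfolding B_def .
  qed
  have "norm (F (A + complex_of_real e) - F (A + complex_of_real h)) \<le> B * norm ((A + complex_of_real e) - (A + complex_of_real h))"
    by (rule field_differentiable_bound[OF cS der nb mem])
  moreover have "norm ((A + complex_of_real e) - (A + complex_of_real h)) = \<bar>e - h\<bar>"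
  proof -
    have "(A + complex_of_real e) - (A + complex_of_real h) = complex_of_real (e - h)" by simp
    then show ?thesis by (simp only: norm_of_real)
  qed
  ultimately show ?thesis unfolding F_def B_def by simp
qed

lemma interp: fixes D a b l :: real assumes "0 \<le> D" "D \<le> a" "D \<le> b" "0 < l" "l < 1"
  shows "D \<le> a powr l * b powr (1-l)"
proof (cases "D = 0")
  case True then show ?thesis by simp
next
  case False
  then have Dp: "0 < D" using assms by simp
  have "D = D powr l * D powr (1-l)" using Dp by (simp add: powr_add[symmetric])
  also have "\<dots> \<le> a powr l * b powr (1-l)"
    by (rule mult_mono[OF powr_mono2 powr_mono2]) (use assms Dp in auto)
  finally show ?thesis .
qed

lemma diff_bound: fixes A :: complex and \<alpha> l e h :: real
  assumes A: "0 \<le> Re A" "A \<noteq> 0" and eh: "0 < e" "0 < h" and a: "0 < \<alpha>" "\<alpha> < 1" and l: "0 < l" "l < 1"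
  shows "cmod ((A + complex_of_real e) powr complex_of_real (\<alpha>-2) - (A + complex_of_real h) powr complex_of_real (\<alpha>-2))
     \<le> (2 * \<bar>e - h\<bar> powr l) * cmod A powr (\<alpha> - 2 - l)"
proof -
  define D where "D = cmod ((A + complex_of_real e) powr complex_of_real (\<alpha>-2) - (A + complex_of_real h) powr complex_of_real (\<alpha>-2))"
  define r where "r = cmod A"
  have r: "0 < r" using A by (simp add: r_def)
  have D1: "D \<le> 2 * r powr (\<alpha>-3) * \<bar>e - h\<bar>"
    using mvt_powr[OF A eh, of "\<alpha>-2"] a unfolding D_def r_def by (simp add: algebra_simps)
  have nb: "cmod ((A + complex_of_real x) powr complex_of_real (\<alpha>-2)) \<le> r powr (\<alpha>-2)" if "0 < x" for x
  proof -
    have "cmod (A + complex_of_real x) \<ge> r" using cmod_shift[OF A(1), of x] that by (simp add: r_def)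
    then have "cmod (A + complex_of_real x) powr (\<alpha>-2) \<le> r powr (\<alpha>-2)"
      by (intro powr_mono2') (use a r in auto)
    then show ?thesis by (simp add: norm_powr_real_powr')
  qed
  have D2: "D \<le> 2 * r powr (\<alpha>-2)"
    unfolding D_def using norm_triangle_ineq4[of "(A + complex_of_real e) powr complex_of_real (\<alpha>-2)" "(A + complex_of_real h) powr complex_of_real (\<alpha>-2)"]
      nb[OF eh(1)] nb[OF eh(2)] by linarith
  have "D \<le> (2 * r powr (\<alpha>-3) * \<bar>e - h\<bar>) powr l * (2 * r powr (\<alpha>-2)) powr (1-l)"
    by (rule interp[OF _ D1 D2 l]) (simp add: D_def)
  also have "\<dots> = (2 powr l * 2 powr (1-l)) * \<bar>e - h\<bar> powr l * (r powr ((\<alpha>-3)*l) * r powr ((\<alpha>-2)*(1-l)))"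
  proof -
    have 1: "(2 * r powr (\<alpha>-3) * \<bar>e - h\<bar>) powr l = 2 powr l * r powr ((\<alpha>-3)*l) * \<bar>e - h\<bar> powr l"
      by (simp add: powr_mult powr_powr)
    have 2: "(2 * r powr (\<alpha>-2)) powr (1-l) = 2 powr (1-l) * r powr ((\<alpha>-2)*(1-l))"
      by (simp add: powr_mult powr_powr)
    show ?thesis unfolding 1 2 by (simp only: mult_ac)
  qed
  also have "\<dots> = 2 * \<bar>e - h\<bar> powr l * r powr (\<alpha> - 2 - l)"
  proof -
    have e1: "2 powr l * 2 powr (1-l) = (2::real)" by (simp add: powr_add[symmetric])
    have ex: "(\<alpha>-3)*l + (\<alpha>-2)*(1-l) = \<alpha> - 2 - l" by (simp add: algebra_simps)
    have e2: "r powr ((\<alpha>-3)*l) * r powr ((\<alpha>-2)*(1-l)) = r powr (\<alpha> - 2 - l)"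
      by (simp only: powr_add[symmetric] ex)
    show ?thesis unfolding e1 e2 ..
  qed
  finally show ?thesis unfolding D_def r_def by (simp add: mult_ac)
qed

lemma key:
  fixes f :: "complex \<Rightarrow> complex \<Rightarrow> real" and q K s t :: real
  assumes q: "-1 < q" "q < 0" and K: "0 \<le> K" and st: "s < t"
  and bound: "\<And>z w. 0 \<le> Im z \<Longrightarrow> Im w \<le> 0 \<Longrightarrow> - \<i> * (z - w) \<noteq> 0 \<Longrightarrow> f z w \<le> K * cmod (- \<i> * (z - w)) powr (2*q)"
  shows "arclen_integral2 (gamma_path s t) (conj_path (gamma_path s t)) f
     \<le> ennreal (9 * (K * (2/(q+1))^2 * (t-s) powr (2*q+2)))"
proof -
  define L where "L = t - s"
  have L: "0 < L" and t: "t = s + L" using st by (auto simp: L_def)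
  have P: "\<forall>p\<in>set (gamma_path s (s+L)). \<forall>r\<in>set (conj_path (gamma_path s (s+L))).
     ennreal (cmod (snd p - fst p) * cmod (snd r - fst r)) * (\<integral>\<^sup>+u. indicator {0..1} u * (\<integral>\<^sup>+v. indicator {0..1} v *
            ennreal (f (fst p + complex_of_real u * (snd p - fst p)) (fst r + complex_of_real v * (snd r - fst r))) \<partial>lborel) \<partial>lborel)
     \<le> ennreal (K * (2/(q+1))^2 * L powr (2*q+2))"
    by (rule pairs0[OF q K L bound])
  have "arclen_integral2 (gamma_path s (s+L)) (conj_path (gamma_path s (s+L))) f
     \<le> of_nat (length (gamma_path s (s+L)) * length (conj_path (gamma_path s (s+L)))) * ennreal (K * (2/(q+1))^2 * L powr (2*q+2))"
    unfolding arclen_integral2_def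
  proof (rule list_bound)
    fix a b c d assume ab: "(a,b) \<in> set (gamma_path s (s+L))" and cd: "(c,d) \<in> set (conj_path (gamma_path s (s+L)))"
    from bspec[OF bspec[OF P ab] cd] show "ennreal (cmod (b - a) * cmod (d - c)) * (\<integral>\<^sup>+u. indicator {0..1} u * (\<integral>\<^sup>+v. indicator {0..1} v *
            ennreal (f (a + complex_of_real u * (b - a)) (c + complex_of_real v * (d - c))) \<partial>lborel) \<partial>lborel)
     \<le> ennreal (K * (2/(q+1))^2 * L powr (2*q+2))" by (simp only: fst_conv snd_conv)
  qed
  also have "\<dots> = ennreal (9 * (K * (2/(q+1))^2 * L powr (2*q+2)))"
    using K by (simp add: gamma_path_def conj_path_def ennreal_mult')
  finally have "arclen_integral2 (gamma_path s (s+L)) (conj_path (gamma_path s (s+L))) f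
     \<le> ennreal (9 * (K * (2/(q+1))^2 * L powr (2*q+2)))" .
  moreover have sL: "s + L = t" using t by simp
  ultimately show ?thesis unfolding sL by (simp only: L_def)
qed

lemma ReA: "Re (- \<i> * (z - w)) = Im z - Im w" by simp

theorem lemma6p1:
  fixes T \<alpha> :: real
  assumes "0 < \<alpha>" "\<alpha> < 1"
  shows "(\<exists>c::real. \<forall>s t \<epsilon>. 0 \<le> s \<longrightarrow> s < t \<longrightarrow> t \<le> T \<longrightarrow> 0 < \<epsilon> \<longrightarrow>
            arclen_integral2 (gamma_path s t) (conj_path (gamma_path s t))
              (\<lambda>z w. cmod (- \<i> * (z - w) + complex_of_real \<epsilon>) powr (\<alpha> - 2))
            \<le> ennreal (c * \<bar>t - s\<bar> powr \<alpha>))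
       \<and> (\<forall>lam::real. 0 < lam \<longrightarrow> lam < \<alpha> \<longrightarrow>
           (\<exists>c::real. \<forall>s t \<epsilon> \<eta>. 0 \<le> s \<longrightarrow> s < t \<longrightarrow> t \<le> T \<longrightarrow> 0 < \<epsilon> \<longrightarrow> 0 < \<eta> \<longrightarrow>
            arclen_integral2 (gamma_path s t) (conj_path (gamma_path s t))
              (\<lambda>z w. cmod ((- \<i> * (z - w) + complex_of_real \<epsilon>) powr complex_of_real (\<alpha> - 2)
                          - (- \<i> * (z - w) + complex_of_real \<eta>) powr complex_of_real (\<alpha> - 2)))
            \<le> ennreal (c * \<bar>t - s\<bar> powr (\<alpha> - lam) * \<bar>\<epsilon> - \<eta>\<bar> powr lam)))"
proof (intro conjI allI impI)
  define q where "q = (\<alpha> - 2) / 2"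
  have q: "-1 < q" "q < 0" using assms by (auto simp: q_def)
  have q2: "2*q = \<alpha> - 2" "2*q+2 = \<alpha>" by (auto simp: q_def field_simps)
  show "\<exists>c::real. \<forall>s t \<epsilon>. 0 \<le> s \<longrightarrow> s < t \<longrightarrow> t \<le> T \<longrightarrow> 0 < \<epsilon> \<longrightarrow>
            arclen_integral2 (gamma_path s t) (conj_path (gamma_path s t))
              (\<lambda>z w. cmod (- \<i> * (z - w) + complex_of_real \<epsilon>) powr (\<alpha> - 2))
            \<le> ennreal (c * \<bar>t - s\<bar> powr \<alpha>)"
  proof (intro exI[of _ "9 * (2/(q+1))^2"] allI impI)
    fix s t \<epsilon> :: real assume st: "0 \<le> s" "s < t" "t \<le> T" "0 < \<epsilon>"
    have bd: "cmod (- \<i> * (z - w) + complex_of_real \<epsilon>) powr (\<alpha> - 2) \<le> 1 * cmod (- \<i> * (z - w)) powr (2*q)"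
      if zw: "0 \<le> Im z" "Im w \<le> 0" "- \<i> * (z - w) \<noteq> 0" for z w
    proof -
      have "cmod (- \<i> * (z - w)) \<le> cmod (- \<i> * (z - w) + complex_of_real \<epsilon>)"
        by (rule cmod_shift) (use zw st in auto)
      then show ?thesis unfolding q2
        by (simp, intro powr_mono2') (use assms zw in auto)
    qed
    have "arclen_integral2 (gamma_path s t) (conj_path (gamma_path s t))
              (\<lambda>z w. cmod (- \<i> * (z - w) + complex_of_real \<epsilon>) powr (\<alpha> - 2))
       \<le> ennreal (9 * (1 * (2/(q+1))^2 * (t-s) powr (2*q+2)))"
      by (rule key[OF q _ st(2)]) (use bd in auto)
    then show "arclen_integral2 (gamma_path s t) (conj_path (gamma_path s t))
              (\<lambda>z w. cmod (- \<i> * (z - w) + complex_of_real \<epsilon>) powr (\<alpha> - 2))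
            \<le> ennreal (9 * (2/(q+1))^2 * \<bar>t - s\<bar> powr \<alpha>)"
      using st unfolding q2(2) by (simp add: mult_ac)
  qed
next
  fix lam :: real assume lam: "0 < lam" "lam < \<alpha>"
  define q where "q = (\<alpha> - lam - 2) / 2"
  have q: "-1 < q" "q < 0" using assms lam by (auto simp: q_def)
  have q2: "2*q = \<alpha> - 2 - lam" "2*q+2 = \<alpha> - lam" by (auto simp: q_def field_simps)
  show "\<exists>c::real. \<forall>s t \<epsilon> \<eta>. 0 \<le> s \<longrightarrow> s < t \<longrightarrow> t \<le> T \<longrightarrow> 0 < \<epsilon> \<longrightarrow> 0 < \<eta> \<longrightarrow>
            arclen_integral2 (gamma_path s t) (conj_path (gamma_path s t))
              (\<lambda>z w. cmod ((- \<i> * (z - w) + complex_of_real \<epsilon>) powr complex_of_real (\<alpha> - 2)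
                          - (- \<i> * (z - w) + complex_of_real \<eta>) powr complex_of_real (\<alpha> - 2)))
            \<le> ennreal (c * \<bar>t - s\<bar> powr (\<alpha> - lam) * \<bar>\<epsilon> - \<eta>\<bar> powr lam)"
  proof (intro exI[of _ "18 * (2/(q+1))^2"] allI impI)
    fix s t \<epsilon> \<eta> :: real assume st: "0 \<le> s" "s < t" "t \<le> T" "0 < \<epsilon>" "0 < \<eta>"
    have bd: "cmod ((- \<i> * (z - w) + complex_of_real \<epsilon>) powr complex_of_real (\<alpha> - 2)
                          - (- \<i> * (z - w) + complex_of_real \<eta>) powr complex_of_real (\<alpha> - 2))
       \<le> (2 * \<bar>\<epsilon> - \<eta>\<bar> powr lam) * cmod (- \<i> * (z - w)) powr (2*q)"
      if zw: "0 \<le> Im z" "Im w \<le> 0" "- \<i> * (z - w) \<noteq> 0" for z w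
      unfolding q2
      by (rule diff_bound) (use zw st assms lam in auto)
    have "arclen_integral2 (gamma_path s t) (conj_path (gamma_path s t))
              (\<lambda>z w. cmod ((- \<i> * (z - w) + complex_of_real \<epsilon>) powr complex_of_real (\<alpha> - 2)
                          - (- \<i> * (z - w) + complex_of_real \<eta>) powr complex_of_real (\<alpha> - 2)))
       \<le> ennreal (9 * ((2 * \<bar>\<epsilon> - \<eta>\<bar> powr lam) * (2/(q+1))^2 * (t-s) powr (2*q+2)))"
      by (rule key[OF q _ st(2)]) (use bd in auto)
    then show "arclen_integral2 (gamma_path s t) (conj_path (gamma_path s t))
              (\<lambda>z w. cmod ((- \<i> * (z - w) + complex_of_real \<epsilon>) powr complex_of_real (\<alpha> - 2)
                          - (- \<i> * (z - w) + complex_of_real \<eta>) powr complex_of_real (\<alpha> - 2)))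
            \<le> ennreal (18 * (2/(q+1))^2 * \<bar>t - s\<bar> powr (\<alpha> - lam) * \<bar>\<epsilon> - \<eta>\<bar> powr lam)"
      using st unfolding q2(2) by (simp add: mult_ac)
  qed
qed

end
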